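(* There exists $n_0$ such that for all positive integers $N$ and $k$ with $n := \binom{N}{k} \ge n_0$ and $k \le \sqrt[3]{\ln n}$, there exists a tournament $T$ on $N$ nodes whose auxiliary bipartite graph $G(T)$ is $k$-covered.
   Context: Let $T=(V,E)$ be a tournament on $N$ nodes and let $k \le N$ be a positive integer. The auxiliary bipartite digraph $G(T)$ has vertex set $R \cup C$, where $R$ contains one vertex for each node of $T$ and $C$ contains one vertex for each $k$-element subset of $V$. Its arcs are: for each $X = \{v_1,\dots,v_k\} \in C$, the arcs $(v_i, X)$ for $1 \le i \le k$; and for each $u \in R$ and $X \in C$, the arc $(X, u)$ if and only if $u$ dominates $X$ in $T$, i.e. $(u, v_i) \in E$ for all $v_i \in X$. A set of vertices $W = \{w_1,\dots,w_t\}$ of a digraph is covered if there is a vertex $y$ such that $(w_j, y)$ is an arc for all $1 \le j \le t$. A bipartite digraph is $k$-covered if every collection of $k$ vertices lying on the same side of the bipartition is covered. Here $\ln$ is the natural logarithm. *)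

theory Defs
  imports Complex_Main
begin

definition tournament :: "nat \<Rightarrow> (nat \<Rightarrow> nat \<Rightarrow> bool) \<Rightarrow> bool" where
  "tournament N E \<longleftrightarrow>
     (\<forall>u v. E u v \<longrightarrow> u < N \<and> v < N) \<and>
     (\<forall>u<N. \<not> E u u) \<and>
     (\<forall>u<N. \<forall>v<N. u \<noteq> v \<longrightarrow> (E u v \<longleftrightarrow> \<not> E v u))"

type_synonym gvert = "nat + nat set"

definition G_R :: "nat \<Rightarrow> gvert set" where
  "G_R N = Inl ` {0..<N}"

definition G_C :: "nat \<Rightarrow> nat \<Rightarrow> gvert set" where
  "G_C N k = Inr ` {X. X \<subseteq> {0..<N} \<and> card X = k}"

definition G_verts :: "nat \<Rightarrow> nat \<Rightarrow> gvert set" where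
  "G_verts N k = G_R N \<union> G_C N k"

definition dominates :: "(nat \<Rightarrow> nat \<Rightarrow> bool) \<Rightarrow> nat \<Rightarrow> nat set \<Rightarrow> bool" where
  "dominates E u X \<longleftrightarrow> (\<forall>v\<in>X. E u v)"

definition G_arc :: "nat \<Rightarrow> nat \<Rightarrow> (nat \<Rightarrow> nat \<Rightarrow> bool) \<Rightarrow> gvert \<Rightarrow> gvert \<Rightarrow> bool" where
  "G_arc N k E a b \<longleftrightarrow>
     (\<exists>v X. a = Inl v \<and> b = Inr X \<and> a \<in> G_R N \<and> b \<in> G_C N k \<and> v \<in> X) \<or>
     (\<exists>X u. a = Inr X \<and> b = Inl u \<and> a \<in> G_C N k \<and> b \<in> G_R N \<and> dominates E u X)"

definition covered :: "'v set \<Rightarrow> ('v \<Rightarrow> 'v \<Rightarrow> bool) \<Rightarrow> 'v set \<Rightarrow> bool" where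
  "covered Vs A W \<longleftrightarrow> (\<exists>y\<in>Vs. \<forall>w\<in>W. A w y)"

definition k_covered :: "nat \<Rightarrow> 'v set \<Rightarrow> 'v set \<Rightarrow> ('v \<Rightarrow> 'v \<Rightarrow> bool) \<Rightarrow> bool" where
  "k_covered k P Q A \<longleftrightarrow>
     (\<forall>W. (W \<subseteq> P \<or> W \<subseteq> Q) \<and> card W = k \<longrightarrow> covered (P \<union> Q) A W)"

definition GT_k_covered :: "nat \<Rightarrow> nat \<Rightarrow> (nat \<Rightarrow> nat \<Rightarrow> bool) \<Rightarrow> bool" where
  "GT_k_covered N k E \<longleftrightarrow> k_covered k (G_R N) (G_C N k) (G_arc N k E)"

end

theory Submission
  imports Defs
begin


lemma split_count:
  fixes D B g :: "'a set"
  assumes "finite D" "B \<subseteq> D" "g \<subseteq> B" "\<And>F. Q F \<longleftrightarrow> Q (F - B)"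
  shows "card {F. F \<subseteq> D \<and> Q F} = card {F. F \<subseteq> D \<and> Q F \<and> F \<inter> B = g} * 2 ^ card B"
proof -
  define A where "A = {G. G \<subseteq> D - B \<and> Q G}"
  have b1: "bij_betw (\<lambda>F. F - B) {F. F \<subseteq> D \<and> Q F \<and> F \<inter> B = g} A"
  proof (rule bij_betw_byWitness[where f' = "\<lambda>G. G \<union> g"])
    show "(\<lambda>F. F - B) ` {F. F \<subseteq> D \<and> Q F \<and> F \<inter> B = g} \<subseteq> A"
      using assms(4) by (auto simp: A_def)
    show "(\<lambda>G. G \<union> g) ` A \<subseteq> {F. F \<subseteq> D \<and> Q F \<and> F \<inter> B = g}"
    proof
      fix F assume "F \<in> (\<lambda>G. G \<union> g) ` A"
      then obtain G where G: "F = G \<union> g" "G \<subseteq> D - B" "Q G" by (auto simp: A_def)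
      moreover have "(G \<union> g) - B = G" using G assms(3) by auto
      ultimately show "F \<in> {F. F \<subseteq> D \<and> Q F \<and> F \<inter> B = g}"
        using assms by auto (metis)
    qed
    show "\<forall>x \<in> {F. F \<subseteq> D \<and> Q F \<and> F \<inter> B = g}. x - B \<union> g = x" by auto
    show "\<forall>y \<in> A. y \<union> g - B = y" using assms(3) by (auto simp: A_def)
  qed
  have b2: "bij_betw (\<lambda>F. (F - B, F \<inter> B)) {F. F \<subseteq> D \<and> Q F} (A \<times> Pow B)"
  proof (rule bij_betw_byWitness[where f' = "\<lambda>(G,H). G \<union> H"])
    show "(\<lambda>F. (F - B, F \<inter> B)) ` {F. F \<subseteq> D \<and> Q F} \<subseteq> A \<times> Pow B"
      using assms(4) by (auto simp: A_def)
    show "(\<lambda>(G,H). G \<union> H) ` (A \<times> Pow B) \<subseteq> {F. F \<subseteq> D \<and> Q F}"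
    proof
      fix F assume "F \<in> (\<lambda>(G,H). G \<union> H) ` (A \<times> Pow B)"
      then obtain G H where p: "F = G \<union> H" "G \<subseteq> D - B" "Q G" "H \<subseteq> B" by (auto simp: A_def)
      moreover have "(G \<union> H) - B = G" using p by auto
      ultimately show "F \<in> {F. F \<subseteq> D \<and> Q F}"
        using assms by auto (metis)
    qed
  qed (auto simp: A_def)
  have fB: "finite B" using assms(1,2) finite_subset by blast
  have "card {F. F \<subseteq> D \<and> Q F} = card (A \<times> Pow B)" using bij_betw_same_card[OF b2] .
  also have "\<dots> = card A * 2 ^ card B" by (simp add: card_cartesian_product card_Pow fB)
  also have "card A = card {F. F \<subseteq> D \<and> Q F \<and> F \<inter> B = g}" using bij_betw_same_card[OF b1] by simp
  finally show ?thesis .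
qed

lemma count_bad:
  fixes D :: "'a set" and B g :: "'b \<Rightarrow> 'a set"
  assumes "finite U" "finite D" "\<And>u. u \<in> U \<Longrightarrow> B u \<subseteq> D \<and> g u \<subseteq> B u \<and> card (B u) = s"
    "\<And>u w. u \<in> U \<Longrightarrow> w \<in> U \<Longrightarrow> u \<noteq> w \<Longrightarrow> B u \<inter> B w = {}"
  shows "real (card {F. F \<subseteq> D \<and> (\<forall>u\<in>U. F \<inter> B u \<noteq> g u)}) = 2 ^ card D * (1 - 1 / 2 ^ s) ^ card U"
  using assms(1,3,4)
proof (induction U rule: finite_induct)
  case empty
  then show ?case using assms(2) by (simp add: card_Pow flip: Pow_def)
next
  case (insert u U)
  define Q where "Q F = (\<forall>w\<in>U. F \<inter> B w \<noteq> g w)" for F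
  have IH: "real (card {F. F \<subseteq> D \<and> Q F}) = 2 ^ card D * (1 - 1 / 2 ^ s) ^ card U"
    unfolding Q_def using insert by auto
  have Bu: "B u \<subseteq> D" "g u \<subseteq> B u" "card (B u) = s" using insert by auto
  have QB: "Q F \<longleftrightarrow> Q (F - B u)" for F
  proof -
    have "(F - B u) \<inter> B w = F \<inter> B w" if "w \<in> U" for w
      using insert.prems(2)[of u w] insert.hyps that by auto
    then show ?thesis unfolding Q_def by auto
  qed
  have sc: "card {F. F \<subseteq> D \<and> Q F} = card {F. F \<subseteq> D \<and> Q F \<and> F \<inter> B u = g u} * 2 ^ s"
    using split_count[OF assms(2) Bu(1,2), of Q] QB Bu(3) by simp
  have eq: "{F. F \<subseteq> D \<and> (\<forall>w\<in>insert u U. F \<inter> B w \<noteq> g w)} =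
     {F. F \<subseteq> D \<and> Q F} - {F. F \<subseteq> D \<and> Q F \<and> F \<inter> B u = g u}"
    unfolding Q_def by auto
  have fin: "finite {F. F \<subseteq> D \<and> Q F}" by (rule finite_subset[of _ "Pow D"]) (auto simp: assms(2))
  have "real (card ({F. F \<subseteq> D \<and> Q F} - {F. F \<subseteq> D \<and> Q F \<and> F \<inter> B u = g u}))
      = real (card {F. F \<subseteq> D \<and> Q F}) - real (card {F. F \<subseteq> D \<and> Q F \<and> F \<inter> B u = g u})"
  proof -
    have "card {F. F \<subseteq> D \<and> Q F \<and> F \<inter> B u = g u} \<le> card {F. F \<subseteq> D \<and> Q F}"
      by (rule card_mono[OF fin]) auto
    moreover have "card ({F. F \<subseteq> D \<and> Q F} - {F. F \<subseteq> D \<and> Q F \<and> F \<inter> B u = g u})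
      = card {F. F \<subseteq> D \<and> Q F} - card {F. F \<subseteq> D \<and> Q F \<and> F \<inter> B u = g u}"
      by (rule card_Diff_subset) (auto intro: finite_subset[OF _ fin])
    ultimately show ?thesis by (simp add: of_nat_diff)
  qed
  also have "real (card {F. F \<subseteq> D \<and> Q F \<and> F \<inter> B u = g u}) = real (card {F. F \<subseteq> D \<and> Q F}) / 2 ^ s"
    using sc by (simp add: field_simps)
  finally show ?case using eq IH insert.hyps by (simp add: field_simps)
qed


lemma ln2_le: "ln (2::real) \<le> 4/5"
proof -
  have "ln (2::real) = ln (6/5) + ln (5/4) + ln (4/3)"
    using ln_mult[of "6/5*(5/4)::real" "4/3"] ln_mult[of "6/5::real" "5/4"] by simp
  also have "\<dots> \<le> (6/5 - 1) + (5/4 - 1) + (4/3 - 1)"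
    by (intro add_mono ln_le_minus_one) auto
  finally show ?thesis by simp
qed

lemma exp_quartic: assumes "0 \<le> y" shows "y^4 / 256 \<le> exp (y::real)"
proof -
  have h: "z^2/4 \<le> exp z" if "0 \<le> z" for z :: real
  proof -
    have "(z/2)^2 \<le> (1 + z/2)^2" using that by (intro power_mono) auto
    also have "\<dots> \<le> exp (z/2) ^ 2" using that exp_ge_add_one_self[of "z/2"] by (intro power_mono) auto
    also have "\<dots> = exp z" by (simp add: power2_eq_square flip: exp_add)
    finally show ?thesis by (simp add: power2_eq_square)
  qed
  have "y^4/256 = ((y/2)^2/4)^2" by (simp add: power2_eq_square field_simps) (simp add: power_def)
  also have "\<dots> \<le> exp (y/2) ^ 2" using h[of "y/2"] assms by (intro power_mono) auto
  also have "\<dots> = exp y" by (simp add: power2_eq_square flip: exp_add)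
  finally show ?thesis .
qed

lemma key_real: assumes "(1000::real) \<le> x" shows "x^2 * 2 powr x + x < exp x"
proof -
  have p1: "1 \<le> 2 powr x" using assms powr_mono[of 0 x 2] by simp
  have p2: "2 powr x \<le> exp (4/5 * x)"
    using ln2_le assms by (simp add: powr_def mult_right_mono)
  have q: "x^2 + x < exp (x/5)"
  proof -
    have "x^2 \<ge> 1000000" using assms power_mono[of 1000 x 2] by simp
    moreover have "1000000 * x^2 \<le> x^2 * x^2" using \<open>x^2 \<ge> 1000000\<close> by (intro mult_right_mono) auto
    moreover have "x \<le> x^2" using assms by (simp add: power2_eq_square)
    ultimately have "x^2 + x < (x^2) * (x^2) / 160000" by (simp add: field_simps)
    also have "\<dots> = (x/5)^4/256" by (simp add: field_simps power_def)
    also have "\<dots> \<le> exp (x/5)" using assms by (intro exp_quartic) auto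
    finally show ?thesis .
  qed
  have "x^2 * 2 powr x + x \<le> (x^2 + x) * 2 powr x" using p1 assms by (simp add: algebra_simps)
  also have "\<dots> \<le> (x^2+x) * exp (4/5 * x)" using p2 assms by (intro mult_left_mono) auto
  also have "\<dots> < exp (x/5) * exp (4/5*x)" using q by (intro mult_strict_right_mono) auto
  also have "\<dots> = exp x" by (simp flip: exp_add)
  finally show ?thesis .
qed


definition Dp :: "nat \<Rightarrow> (nat \<times> nat) set" where "Dp N = {(i,j). i < j \<and> j < N}"
definition Eof :: "nat \<Rightarrow> (nat \<times> nat) set \<Rightarrow> nat \<Rightarrow> nat \<Rightarrow> bool" where
  "Eof N F u v \<longleftrightarrow> (u,v) \<in> F \<or> ((v,u) \<in> Dp N \<and> (v,u) \<notin> F)"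
definition Bp :: "nat \<Rightarrow> nat set \<Rightarrow> (nat \<times> nat) set" where "Bp u S = (\<lambda>v. (min u v, max u v)) ` S"
definition gp :: "nat \<Rightarrow> nat set \<Rightarrow> (nat \<times> nat) set" where "gp u S = (\<lambda>v. (u,v)) ` {v\<in>S. u < v}"

lemma finite_Dp: "finite (Dp N)"
  by (rule finite_subset[of _ "{0..<N} \<times> {0..<N}"]) (auto simp: Dp_def)

lemma tour: assumes "F \<subseteq> Dp N" shows "tournament N (Eof N F)"
proof -
  have h: "\<And>a b. (a,b) \<in> F \<Longrightarrow> a < b \<and> b < N" using assms by (auto simp: Dp_def)
  show ?thesis unfolding tournament_def Eof_def Dp_def
    using h by (auto dest: h) (meson h less_asym)+
qed

lemma dom_iff:
  assumes F: "F \<subseteq> Dp N" and S: "S \<subseteq> {0..<N}" and u: "u < N" "u \<notin> S"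
  shows "(\<forall>v\<in>S. Eof N F u v) \<longleftrightarrow> F \<inter> Bp u S = gp u S"
proof
  assume H: "\<forall>v\<in>S. Eof N F u v"
  show "F \<inter> Bp u S = gp u S"
  proof
    show "F \<inter> Bp u S \<subseteq> gp u S"
    proof
      fix p assume p: "p \<in> F \<inter> Bp u S"
      then obtain v where v: "v \<in> S" "p = (min u v, max u v)" by (auto simp: Bp_def)
      have "u \<noteq> v" using u v by auto
      show "p \<in> gp u S"
      proof (cases "u < v")
        case True then show ?thesis using v by (auto simp: gp_def)
      next
        case False
        then have "p = (v,u)" "v < u" using v \<open>u \<noteq> v\<close> by auto
        moreover have "(u,v) \<notin> F" using F \<open>v < u\<close> by (auto simp: Dp_def)
        ultimately show ?thesis using H v p by (auto simp: Eof_def)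
      qed
    qed
    show "gp u S \<subseteq> F \<inter> Bp u S"
    proof
      fix p assume "p \<in> gp u S"
      then obtain v where v: "v \<in> S" "u < v" "p = (u,v)" by (auto simp: gp_def)
      then have "(u,v) \<in> F" using H by (auto simp: Eof_def Dp_def)
      moreover have "p \<in> Bp u S" using v by (auto simp: Bp_def intro!: image_eqI[of _ _ v])
      ultimately show "p \<in> F \<inter> Bp u S" using v by auto
    qed
  qed
next
  assume H: "F \<inter> Bp u S = gp u S"
  show "\<forall>v\<in>S. Eof N F u v"
  proof
    fix v assume v: "v \<in> S"
    have "u \<noteq> v" using u v by auto
    show "Eof N F u v"
    proof (cases "u < v")
      case True
      then have "(u,v) \<in> gp u S" using v by (auto simp: gp_def)
      then show ?thesis using H by (auto simp: Eof_def)
    next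
      case False
      then have vu: "v < u" using \<open>u \<noteq> v\<close> by auto
      have "(v,u) \<in> Bp u S" using v vu by (auto simp: Bp_def intro!: image_eqI[of _ _ v])
      moreover have "(v,u) \<notin> gp u S" using vu by (auto simp: gp_def)
      ultimately have "(v,u) \<notin> F" using H by blast
      moreover have "(v,u) \<in> Dp N" using vu u by (auto simp: Dp_def)
      ultimately show ?thesis by (auto simp: Eof_def)
    qed
  qed
qed

lemma card_Bp: "u \<notin> S \<Longrightarrow> card (Bp u S) = card S"
  unfolding Bp_def
  by (rule card_image) (auto simp: inj_on_def min_def max_def split: if_splits)

lemma Bp_disj: "u \<notin> S \<Longrightarrow> w \<notin> S \<Longrightarrow> u \<noteq> w \<Longrightarrow> Bp u S \<inter> Bp w S = {}"
  unfolding Bp_def by (auto simp: min_def max_def split: if_splits)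



lemma main_real:
  fixes N k n :: nat
  assumes k: "0 < k" and nN: "n \<le> N^k" and kr: "real k \<le> root 3 (ln (real n))"
    and nb: "exp 1000000 \<le> real n"
  shows "real n ^ k * (1 - 1/2^(k^2)) ^ (N - k^2) < 1 \<and> k^2 < N"
proof -
  define L where "L = ln (real n)"
  define m where "m = k^2"
  have npos: "0 < real n" by (rule less_le_trans[OF exp_gt_zero nb])
  have L1: "1000000 \<le> L" unfolding L_def 
  proof -
    have "ln (exp 1000000) \<le> ln (real n)" using npos nb by (subst ln_le_cancel_iff) auto
    then show "1000000 \<le> ln (real n)" by simp
  qed
  have Npos: "0 < N" 
  proof (rule ccontr)
    assume "\<not> 0 < N" then have "N = 0" by simp
    then show False using nN npos k by (simp add: power_0_left)
  qed
  have k3: "real k ^ 3 \<le> L"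
  proof -
    have "real k ^ 3 \<le> root 3 L ^ 3" using kr unfolding L_def by (intro power_mono) auto
    also have "\<dots> = L" using L1 by (simp add: real_root_pow_pos2)
    finally show ?thesis .
  qed
  have LN: "L \<le> real k * ln (real N)"
  proof -
    have "real n \<le> real N ^ k" using nN by (metis of_nat_le_iff of_nat_power)
    then have "L \<le> ln (real N ^ k)" unfolding L_def using npos Npos by (subst ln_le_cancel_iff) auto
    also have "\<dots> = real k * ln (real N)" using Npos by (simp add: ln_realpow)
    finally show ?thesis .
  qed
  define x where "x = L / real k"
  have kpos: "0 < real k" using k by simp
  have xL: "x * real k = L" unfolding x_def using kpos by simp
  have kx: "real k ^ 2 \<le> x" unfolding x_def using k3 kpos by (simp add: field_simps power_def)
  have kk: "real k \<le> real k ^ 2" using k by (simp add: power2_eq_square)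
  have x0: "0 \<le> x" using kx by (smt (verit) zero_le_power2)
  have x2: "L \<le> x^2"
  proof -
    have "x * real k \<le> x * x" using order_trans[OF kk kx] x0 by (intro mult_left_mono) auto
    then show ?thesis using xL by (simp add: power2_eq_square)
  qed
  have x1000: "1000 \<le> x"
  proof (rule ccontr)
    assume "\<not> 1000 \<le> x"
    then have "x^2 < 1000^2" using x0 by (intro power_strict_mono) auto
    then show False using x2 L1 by simp
  qed
  have xN: "x \<le> ln (real N)" unfolding x_def using LN kpos by (simp add: field_simps)
  have Nx: "exp x \<le> real N" using xN Npos by (metis exp_le_cancel_iff exp_ln of_nat_0_less_iff)
  have mx: "real m \<le> x" unfolding m_def using kx by simp
  have pm: "2 ^ m \<le> 2 powr x"
  proof -
    have "(2::real) ^ m = 2 powr (real m)" by (simp add: powr_realpow)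
    also have "\<dots> \<le> 2 powr x" using mx by (intro powr_mono) auto
    finally show ?thesis .
  qed
  have kL: "real k * L \<le> x^2" using kx x0 xL by (simp add: power2_eq_square mult_right_mono flip: xL) (smt (verit) mult.assoc mult.commute mult_right_mono)
  have "real k * L * 2 ^ m + real m \<le> x^2 * 2 powr x + x"
    using kL pm mx by (intro add_mono mult_mono) auto
  also have "\<dots> < exp x" using key_real[OF x1000] .
  also have "\<dots> \<le> real N" using Nx .
  finally have main: "real k * L * 2 ^ m + real m < real N" .
  then have mN: "m < N" by (smt (verit) mult_nonneg_nonneg L1 kpos of_nat_less_iff zero_le_power)
  have mN': "real k * L < (real N - real m) / 2 ^ m" using main by (simp add: field_simps)
  have "(1 - 1/2^m) ^ (N - m) \<le> exp (- (1/(2::real)^m)) ^ (N - m)"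
    by (intro power_mono) (use exp_ge_add_one_self[of "- (1/2^m)"] in \<open>auto simp: field_simps\<close>)
  also have "\<dots> = exp (- (real N - real m) / 2^m)"
    using mN by (simp add: exp_of_nat_mult[symmetric] of_nat_diff field_simps flip: exp_of_nat_mult)
  finally have b1: "(1 - 1/2^m) ^ (N - m) \<le> exp (- (real N - real m) / 2^m)" .
  have "real n ^ k = exp (real k * L)" unfolding L_def using npos by (simp add: exp_of_nat_mult)
  then have "real n ^ k * (1 - 1/2^m) ^ (N - m) \<le> exp (real k * L) * exp (- (real N - real m) / 2^m)"
    using b1 by (simp add: mult_left_mono)
  also have "\<dots> = exp (real k * L - (real N - real m) / 2^m)" by (simp add: exp_add[symmetric] diff_divide_distrib)
  also have "\<dots> < 1" using mN' by simp
  finally show ?thesis using mN unfolding m_def by simp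
qed
definition BadS :: "nat \<Rightarrow> nat set \<Rightarrow> (nat \<times> nat) set set" where
  "BadS N S = {F. F \<subseteq> Dp N \<and> (\<forall>u\<in>{0..<N}-S. F \<inter> Bp u S \<noteq> gp u S)}"

lemma card_BadS:
  assumes "S \<subseteq> {0..<N}"
  shows "real (card (BadS N S)) = 2 ^ card (Dp N) * (1 - 1/2^card S) ^ (N - card S)"
proof -
  have fS: "finite S" using assms finite_subset by blast
  have "real (card (BadS N S)) = 2 ^ card (Dp N) * (1 - 1/2^card S) ^ card ({0..<N}-S)"
    unfolding BadS_def
  proof (rule count_bad)
    show "\<And>u. u \<in> {0..<N} - S \<Longrightarrow> Bp u S \<subseteq> Dp N \<and> gp u S \<subseteq> Bp u S \<and> card (Bp u S) = card S"
    proof (intro conjI)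
      fix u assume u: "u \<in> {0..<N} - S"
      show "card (Bp u S) = card S" using u by (simp add: card_Bp)
      show "Bp u S \<subseteq> Dp N"
      proof
        fix p assume "p \<in> Bp u S"
        then obtain v where v: "v \<in> S" "p = (min u v, max u v)" by (auto simp: Bp_def)
        then have "v \<noteq> u" "v < N" using u assms by auto
        then show "p \<in> Dp N" using v u by (auto simp: Dp_def min_def max_def)
      qed
      show "gp u S \<subseteq> Bp u S"
      proof
        fix p assume "p \<in> gp u S"
        then obtain v where v: "v \<in> S" "u < v" "p = (u,v)" by (auto simp: gp_def)
        then have "p = (min u v, max u v)" by simp
        then show "p \<in> Bp u S" unfolding Bp_def using v by blast
      qed
    qed
    show "\<And>u w. u \<in> {0..<N} - S \<Longrightarrow> w \<in> {0..<N} - S \<Longrightarrow> u \<noteq> w \<Longrightarrow> Bp u S \<inter> Bp w S = {}"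
      by (intro Bp_disj) auto
  qed (auto simp: finite_Dp)
  also have "card ({0..<N}-S) = N - card S" using assms fS by (simp add: card_Diff_subset)
  finally show ?thesis .
qed

theorem lemma1:
  shows "\<exists>n0::nat. \<forall>N k :: nat.
           0 < N \<and> 0 < k \<and> k \<le> N \<and> N choose k \<ge> n0 \<and>
           real k \<le> root 3 (ln (real (N choose k)))
           \<longrightarrow> (\<exists>E. tournament N E \<and> GT_k_covered N k E)"
proof (rule exI, intro allI impI)
  fix N k :: nat
  assume A: "0 < N \<and> 0 < k \<and> k \<le> N \<and> N choose k \<ge> nat \<lceil>exp (1000000::real)\<rceil> \<and>
           real k \<le> root 3 (ln (real (N choose k)))"
  define n where "n = N choose k"
  define m where "m = k^2"
  define q :: real where "q = (1 - 1/2^m) ^ (N - m)"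
  have nb: "exp 1000000 \<le> real n" using A unfolding n_def by simp
  have nN: "n \<le> N^k" unfolding n_def using A by (simp add: binomial_le_pow)
  have R: "real n ^ k * q < 1 \<and> k^2 < N"
    using main_real[OF _ nN _ nb] A unfolding q_def m_def n_def by auto
  have q0: "0 \<le> q" unfolding q_def by simp
  define KS where "KS = {X. X \<subseteq> {0..<N} \<and> card X = k}"
  define Fam where "Fam = {W. W \<subseteq> KS \<and> card W = k}"
  have cKS: "card KS = n" unfolding KS_def n_def using n_subsets[of "{0..<N}" k] by simp
  have fKS: "finite KS" unfolding KS_def by (rule finite_subset[of _ "Pow {0..<N}"]) auto
  have cFam: "card Fam = n choose k" unfolding Fam_def using n_subsets[OF fKS, of k] cKS by simp
  have cFam2: "real (card Fam) \<le> real n ^ k"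
  proof (cases "k \<le> n")
    case True then show ?thesis using cFam binomial_le_pow[OF True] by (metis of_nat_le_iff of_nat_power)
  next
    case False then show ?thesis using cFam by (simp add: binomial_eq_0)
  qed
  have fFam: "finite Fam" unfolding Fam_def by (rule finite_subset[of _ "Pow KS"]) (auto simp: fKS)
  have UW: "\<Union>W \<subseteq> {0..<N} \<and> card (\<Union>W) \<le> m" if W: "W \<in> Fam" for W
  proof -
    have WK: "W \<subseteq> KS" "card W = k" using W unfolding Fam_def by auto
    have "card (\<Union>W) \<le> sum card W" by (rule card_Union_le_sum_card)
    also have "\<dots> = sum (\<lambda>_. k) W" using WK unfolding KS_def by (intro sum.cong) auto
    also have "\<dots> = k * k" using WK by simp
    finally show ?thesis using WK unfolding KS_def m_def by (auto simp: power2_eq_square)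
  qed
  have Bbound: "real (card (BadS N (\<Union>W))) \<le> 2 ^ card (Dp N) * q" if W: "W \<in> Fam" for W
  proof -
    define s where "s = card (\<Union>W)"
    have sm: "s \<le> m" "\<Union>W \<subseteq> {0..<N}" using UW[OF W] unfolding s_def by auto
    have "(1 - 1/(2::real)^s) ^ (N - s) \<le> (1 - 1/2^m) ^ (N - s)"
    proof (rule power_mono)
      have "(2::real)^s \<le> 2^m" using sm by (intro power_increasing) auto
      then have "1/(2::real)^m \<le> 1/2^s" by (intro divide_left_mono) auto
      then show "1 - 1/(2::real)^s \<le> 1 - 1/2^m" by simp
      show "0 \<le> 1 - 1/(2::real)^s" by simp
    qed
    also have "\<dots> \<le> (1 - 1/2^m) ^ (N - m)"
      by (rule power_decreasing) (use sm in auto)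
    finally have "(1 - 1/2^s) ^ (N - s) \<le> q" unfolding q_def .
    then show ?thesis using card_BadS[OF sm(2)] unfolding s_def by (simp add: mult_left_mono)
  qed
  define Bad where "Bad = (\<Union>W\<in>Fam. BadS N (\<Union>W))"
  have "real (card Bad) \<le> real (\<Sum>W\<in>Fam. card (BadS N (\<Union>W)))"
    unfolding Bad_def using card_UN_le[OF fFam] of_nat_le_iff by blast
  also have "\<dots> = (\<Sum>W\<in>Fam. real (card (BadS N (\<Union>W))))" by simp
  also have "\<dots> \<le> (\<Sum>W\<in>Fam. 2 ^ card (Dp N) * q)" by (intro sum_mono Bbound)
  also have "\<dots> = real (card Fam) * (2 ^ card (Dp N) * q)" by simp
  also have "\<dots> \<le> real n ^ k * (2 ^ card (Dp N) * q)" using cFam2 q0 by (intro mult_right_mono) auto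
  also have "\<dots> = 2 ^ card (Dp N) * (real n ^ k * q)" by simp
  also have "\<dots> < 2 ^ card (Dp N)" using R by simp
  finally have cBad: "card Bad < card (Pow (Dp N))" by (simp add: card_Pow finite_Dp)
  have "\<not> Pow (Dp N) \<subseteq> Bad"
  proof
    assume "Pow (Dp N) \<subseteq> Bad"
    moreover have "finite Bad" unfolding Bad_def BadS_def
      by (rule finite_subset[of _ "Pow (Dp N)"]) (auto simp: finite_Dp)
    ultimately have "card (Pow (Dp N)) \<le> card Bad" by (rule card_mono[rotated])
    then show False using cBad by simp
  qed
  then obtain F where F: "F \<subseteq> Dp N" "F \<notin> Bad" by auto
  have good: "\<exists>u<N. u \<notin> \<Union>W \<and> (\<forall>v\<in>\<Union>W. Eof N F u v)" if W: "W \<in> Fam" for W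
  proof -
    have "F \<notin> BadS N (\<Union>W)" using F W unfolding Bad_def by auto
    then obtain u where u: "u \<in> {0..<N} - \<Union>W" "F \<inter> Bp u (\<Union>W) = gp u (\<Union>W)"
      using F unfolding BadS_def by auto
    have uN: "u < N" "u \<notin> \<Union>W" using u by auto
    have "\<forall>v\<in>\<Union>W. Eof N F u v"
      using dom_iff[OF F(1) conjunct1[OF UW[OF W]] uN] u(2) by blast
    then show ?thesis using uN by blast
  qed
  show "\<exists>E. tournament N E \<and> GT_k_covered N k E"
  proof (intro exI conjI)
    show "tournament N (Eof N F)" using tour[OF F(1)] .
    show "GT_k_covered N k (Eof N F)"
      unfolding GT_k_covered_def k_covered_def covered_def
    proof (intro allI impI)
      fix W assume W: "(W \<subseteq> G_R N \<or> W \<subseteq> G_C N k) \<and> card W = k"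
      show "\<exists>y\<in>G_R N \<union> G_C N k. \<forall>w\<in>W. G_arc N k (Eof N F) w y"
      proof (cases "W \<subseteq> G_R N")
        case True
        define X where "X = {v. Inl v \<in> W}"
        have WX: "W = Inl ` X" using True unfolding X_def G_R_def by auto
        have cX: "card X = k" using W WX by (simp add: card_image)
        have XN: "X \<subseteq> {0..<N}" using True unfolding X_def G_R_def by auto
        have y: "Inr X \<in> G_C N k" unfolding G_C_def using cX XN by auto
        show ?thesis
        proof (intro bexI[of _ "Inr X"] ballI)
          fix w assume "w \<in> W"
          then obtain v where "w = Inl v" "v \<in> X" using WX by auto
          then show "G_arc N k (Eof N F) w (Inr X)"
            unfolding G_arc_def using y \<open>w \<in> W\<close> True by auto
        qed (use y in auto)
      next
        case False
        then have WC: "W \<subseteq> G_C N k" using W by auto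
        define Wf where "Wf = {X. Inr X \<in> W}"
        have WX: "W = Inr ` Wf" using WC unfolding Wf_def G_C_def by auto
        have cW: "card Wf = k" using W WX by (simp add: card_image)
        have WK: "Wf \<subseteq> KS" using WC unfolding Wf_def G_C_def KS_def by auto
        have "Wf \<in> Fam" using cW WK unfolding Fam_def by auto
        then obtain u where u: "u < N" "\<forall>v\<in>\<Union>Wf. Eof N F u v" using good by blast
        have y: "Inl u \<in> G_R N" unfolding G_R_def using u by auto
        show ?thesis
        proof (intro bexI[of _ "Inl u"] ballI)
          fix w assume "w \<in> W"
          then obtain X where X: "w = Inr X" "X \<in> Wf" using WX by auto
          have "dominates (Eof N F) u X" unfolding dominates_def using u X by auto
          then show "G_arc N k (Eof N F) w (Inl u)"
            unfolding G_arc_def using y \<open>w \<in> W\<close> WC X by auto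
        qed (use y in auto)
      qed
    qed
  qed
qed

end
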